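(* Let $p=p(n)\in(0,1)$ satisfy $p(n)\log n\to 0$ as $n\to\infty$, and let $G\sim D(n,p)$. Then with probability $1-o(1)$ the number of sources of $G$ is at most $5/p$.
   Context: $D(n,p)$ is the distribution on DAGs with vertex set $\{1,\dots,n\}$ assigning each DAG with $e$ edges probability proportional to $(p/(1-p))^e$. A source is a vertex with no incoming edges. *)

theory Defs
  imports Complex_Main
begin

text \<open>DAGs on vertex set {1..n}: edge sets of directed edges (u,v) meaning u -> v,
  contained in {1..n} x {1..n}, with no directed cycle (acyclic = irreflexive
  transitive closure, which also excludes loops).\<close>
definition dags :: "nat \<Rightarrow> (nat \<times> nat) set set" where
  "dags n = {E. E \<subseteq> {1..n} \<times> {1..n} \<and> acyclic E}"

definition sources :: "nat \<Rightarrow> (nat \<times> nat) set \<Rightarrow> nat set" where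
  "sources n E = {v \<in> {1..n}. \<forall>u. (u, v) \<notin> E}"

text \<open>Weight of a DAG under D(n,p).\<close>
definition dag_weight :: "real \<Rightarrow> (nat \<times> nat) set \<Rightarrow> real" where
  "dag_weight p E = (p / (1 - p)) ^ card E"

definition dag_prob :: "nat \<Rightarrow> real \<Rightarrow> ((nat \<times> nat) set \<Rightarrow> bool) \<Rightarrow> real" where
  "dag_prob n p P =
     (\<Sum>E\<in>{E \<in> dags n. P E}. dag_weight p E) / (\<Sum>E\<in>dags n. dag_weight p E)"

end

theory Submission
  imports Defs
begin


definition dagsV :: "nat set \<Rightarrow> (nat \<times> nat) set set" where
  "dagsV V = {E. E \<subseteq> V \<times> V \<and> acyclic E}"
definition srcs :: "nat set \<Rightarrow> (nat \<times> nat) set \<Rightarrow> nat set" where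
  "srcs V E = {v \<in> V. \<forall>u. (u, v) \<notin> E}"
definition L2 :: "nat set \<Rightarrow> (nat \<times> nat) set \<Rightarrow> nat set" where
  "L2 V E = {v \<in> V - srcs V E. \<forall>u. (u, v) \<in> E \<longrightarrow> u \<in> srcs V E}"

lemma trancl_Un_split:
  assumes "(x,y) \<in> (E \<union> F)\<^sup>+"
  shows "(x,y) \<in> E\<^sup>+ \<or> (\<exists>u v. (u,v) \<in> F \<and> (x,u) \<in> (E \<union> F)\<^sup>* \<and> (v,y) \<in> (E \<union> F)\<^sup>*)"
  using assms
proof (induction rule: trancl_induct)
  case (base y)
  then show ?case by blast
next
  case (step y z)
  show ?case
  proof (cases "(y,z) \<in> F")
    case True
    have "(x,y) \<in> (E \<union> F)\<^sup>*" using step(1) by (rule trancl_into_rtrancl)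
    then show ?thesis using True by blast
  next
    case False
    then have yz: "(y,z) \<in> E" using step(2) by blast
    from step(3) show ?thesis
    proof
      assume "(x,y) \<in> E\<^sup>+" then show ?thesis using yz by auto
    next
      assume "\<exists>u v. (u,v) \<in> F \<and> (x,u) \<in> (E \<union> F)\<^sup>* \<and> (v,y) \<in> (E \<union> F)\<^sup>*"
      then obtain u v where "(u,v) \<in> F" "(x,u) \<in> (E \<union> F)\<^sup>*" "(v,y) \<in> (E \<union> F)\<^sup>*" by blast
      moreover have "(v,z) \<in> (E \<union> F)\<^sup>*" by (rule rtrancl_into_rtrancl[OF \<open>(v,y) \<in> (E \<union> F)\<^sup>*\<close> UnI1[OF yz]])
      ultimately show ?thesis by blast
    qed
  qed
qed

lemma acyclic_Un_src:
  assumes "acyclic E" and "\<And>u v y. (u,v) \<in> F \<Longrightarrow> (y,u) \<notin> E \<union> F"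
  shows "acyclic (E \<union> F)"
  unfolding acyclic_def
proof (intro allI notI)
  fix x assume "(x,x) \<in> (E \<union> F)\<^sup>+"
  from trancl_Un_split[OF this] show False
  proof
    assume "(x,x) \<in> E\<^sup>+" then show False using assms(1) by (simp add: acyclic_def)
  next
    assume "\<exists>u v. (u,v) \<in> F \<and> (x,u) \<in> (E \<union> F)\<^sup>* \<and> (v,x) \<in> (E \<union> F)\<^sup>*"
    then obtain u v where uv: "(u,v) \<in> F" "(x,u) \<in> (E \<union> F)\<^sup>*" "(v,x) \<in> (E \<union> F)\<^sup>*" by blast
    have "(v,u) \<in> (E \<union> F)\<^sup>*" by (rule rtrancl_trans[OF uv(3) uv(2)])
    then have "(u,u) \<in> (E \<union> F)\<^sup>+" by (rule rtrancl_into_trancl2[OF UnI2[OF uv(1)]])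
    then obtain y where "(y,u) \<in> E \<union> F" by (auto elim: tranclE)
    then show False using assms(2)[OF uv(1)] by blast
  qed
qed

lemma sum_pow_card:
  fixes q :: real
  assumes "finite A"
  shows "(\<Sum>X\<in>Pow A. q ^ card X) = (1 + q) ^ card A"
proof -
  have "(\<Prod>x\<in>A. q + 1) = (\<Sum>X\<in>Pow A. (\<Prod>x\<in>X. q) * (\<Prod>x\<in>A-X. 1))"
    by (rule prod_add[OF assms])
  then show ?thesis by (simp add: ac_simps)
qed

lemma sum_pow_card_ne:
  fixes q :: real
  assumes "finite A"
  shows "(\<Sum>X\<in>Pow A - {{}}. q ^ card X) = (1 + q) ^ card A - 1"
proof -
  have "(\<Sum>X\<in>Pow A - {{}}. q ^ card X) = (\<Sum>X\<in>Pow A. q ^ card X) - q ^ card ({}::'a set)"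
    by (subst sum_diff1) (use assms in auto)
  then show ?thesis using sum_pow_card[OF assms] by simp
qed

lemma finite_dagsV: "finite V \<Longrightarrow> finite (dagsV V)"
  unfolding dagsV_def by (rule finite_subset[of _ "Pow (V \<times> V)"]) auto



definition Bset :: "nat set \<Rightarrow> nat set \<Rightarrow> nat set \<Rightarrow> (nat \<times> nat) set set" where
  "Bset S R Z = {B. B \<subseteq> S \<times> R \<and> (\<forall>v\<in>Z. \<exists>u. (u,v) \<in> B)}"

lemma Bset_finite: "finite S \<Longrightarrow> finite R \<Longrightarrow> finite (Bset S R Z)"
  unfolding Bset_def by (rule finite_subset[of _ "Pow (S \<times> R)"]) auto

lemma Bsum:
  fixes q :: real
  assumes "finite S" "finite R" "Z \<subseteq> R"
  shows "(\<Sum>B\<in>Bset S R Z. q ^ card B) =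
           ((1+q)^card S)^(card R - card Z) * ((1+q)^card S - 1)^card Z"
  using assms(2,3)
proof (induction R arbitrary: Z rule: finite_induct)
  case empty
  then have "Z = {}" by auto
  moreover have "Bset S {} {} = {{}}" unfolding Bset_def by auto
  ultimately show ?case by simp
next
  case (insert v R)
  define Z' where "Z' = Z - {v}"
  have Z': "Z' \<subseteq> R" using insert.prems insert.hyps unfolding Z'_def by auto
  define Cs where "Cs = (if v \<in> Z then Pow (S \<times> {v}) - {{}} else Pow (S \<times> {v}))"
  have eq: "Bset S (insert v R) Z = (\<lambda>(B1,C). B1 \<union> C) ` (Bset S R Z' \<times> Cs)"
  proof (rule set_eqI, rule iffI)
    fix B assume B: "B \<in> Bset S (insert v R) Z"
    let ?B1 = "B \<inter> (S \<times> R)" and ?C = "B \<inter> (S \<times> {v})"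
    have Beq: "B = ?B1 \<union> ?C" using B unfolding Bset_def by auto
    have B1in: "?B1 \<in> Bset S R Z'"
    proof -
      { fix z assume "z \<in> Z'"
        then have "z \<in> Z" "z \<noteq> v" "z \<in> R" using Z' unfolding Z'_def by auto
        then obtain u where "(u,z) \<in> B" using B unfolding Bset_def by auto
        then have "(u,z) \<in> ?B1" using B \<open>z \<in> R\<close> unfolding Bset_def by auto
        then have "\<exists>u. (u,z) \<in> ?B1" by blast }
      then show ?thesis unfolding Bset_def by auto
    qed
    have Cin: "?C \<in> Cs"
    proof (cases "v \<in> Z")
      case True
      then obtain u where "(u,v) \<in> B" using B unfolding Bset_def by auto
      then have "(u,v) \<in> ?C" using B unfolding Bset_def by auto
      then show ?thesis using True unfolding Cs_def by auto
    next
      case False then show ?thesis unfolding Cs_def by auto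
    qed
    have "(?B1, ?C) \<in> Bset S R Z' \<times> Cs" using B1in Cin by blast
    then show "B \<in> (\<lambda>(B1,C). B1 \<union> C) ` (Bset S R Z' \<times> Cs)"
      by (rule image_eqI[rotated]) (simp only: prod.case Beq[symmetric])
  next
    fix B assume "B \<in> (\<lambda>(B1,C). B1 \<union> C) ` (Bset S R Z' \<times> Cs)"
    then obtain B1 C where B: "B = B1 \<union> C" "B1 \<in> Bset S R Z'" "C \<in> Cs" by auto
    have C: "C \<subseteq> S \<times> {v}" "v \<in> Z \<Longrightarrow> C \<noteq> {}" using B(3) unfolding Cs_def by (auto split: if_splits)
    show "B \<in> Bset S (insert v R) Z"
      unfolding Bset_def
    proof (intro CollectI conjI ballI)
      show "B \<subseteq> S \<times> insert v R" using B C unfolding Bset_def by auto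
    next
      fix z assume z: "z \<in> Z"
      show "\<exists>u. (u, z) \<in> B"
      proof (cases "z = v")
        case True
        then obtain e where "e \<in> C" using C z by auto
        then show ?thesis using C True B(1) by auto
      next
        case False
        then have "z \<in> Z'" using z unfolding Z'_def by auto
        then show ?thesis using B(1,2) unfolding Bset_def by auto
      qed
    qed
  qed
  have inj: "inj_on (\<lambda>(B1,C). B1 \<union> C) (Bset S R Z' \<times> Cs)"
  proof (rule inj_onI, clarify)
    fix B1 C B1' C'
    assume a: "B1 \<in> Bset S R Z'" "C \<in> Cs" "B1' \<in> Bset S R Z'" "C' \<in> Cs" "B1 \<union> C = B1' \<union> C'"
    have s: "B1 \<subseteq> S \<times> R" "B1' \<subseteq> S \<times> R" "C \<subseteq> S \<times> {v}" "C' \<subseteq> S \<times> {v}"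
      using a unfolding Bset_def Cs_def by (auto split: if_splits)
    have "B1 = (B1 \<union> C) \<inter> (S \<times> R)" using s insert.hyps by auto
    moreover have "B1' = (B1' \<union> C') \<inter> (S \<times> R)" using s insert.hyps by auto
    moreover have "C = (B1 \<union> C) \<inter> (S \<times> {v})" using s insert.hyps by auto
    moreover have "C' = (B1' \<union> C') \<inter> (S \<times> {v})" using s insert.hyps by auto
    ultimately show "B1 = B1' \<and> C = C'" using a(5) by simp
  qed
  have cardU: "card (B1 \<union> C) = card B1 + card C" if "B1 \<in> Bset S R Z'" "C \<in> Cs" for B1 C
  proof -
    have s: "B1 \<subseteq> S \<times> R" "C \<subseteq> S \<times> {v}"
      using that unfolding Bset_def Cs_def by (auto split: if_splits)
    have "finite B1" "finite C" using s assms(1) insert.hyps finite_subset by blast+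
    moreover have "B1 \<inter> C = {}" using s insert.hyps by auto
    ultimately show ?thesis by (rule card_Un_disjoint)
  qed
  have "(\<Sum>B\<in>Bset S (insert v R) Z. q ^ card B) = (\<Sum>(B1,C)\<in>Bset S R Z' \<times> Cs. q ^ card (B1 \<union> C))"
    unfolding eq by (subst sum.reindex[OF inj]) (simp add: case_prod_unfold)
  also have "\<dots> = (\<Sum>(B1,C)\<in>Bset S R Z' \<times> Cs. q ^ card B1 * q ^ card C)"
    by (rule sum.cong) (auto simp: cardU power_add)
  also have "\<dots> = (\<Sum>B1\<in>Bset S R Z'. q ^ card B1) * (\<Sum>C\<in>Cs. q ^ card C)"
    by (simp add: sum_product sum.cartesian_product)
  also have "(\<Sum>C\<in>Cs. q ^ card C) = (if v \<in> Z then (1+q)^card S - 1 else (1+q)^card S)"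
  proof -
    have fin: "finite (S \<times> {v})" using assms(1) by auto
    have cS: "card (S \<times> {v}) = card S" by (simp add: card_cartesian_product)
    show ?thesis unfolding Cs_def using sum_pow_card[OF fin, of q] sum_pow_card_ne[OF fin, of q] cS by simp
  qed
  also have "(\<Sum>B1\<in>Bset S R Z'. q ^ card B1) = ((1+q)^card S)^(card R - card Z') * ((1+q)^card S - 1)^card Z'"
    by (rule insert.IH[OF Z'])
  finally have res: "(\<Sum>B\<in>Bset S (insert v R) Z. q ^ card B) = ((1+q)^card S)^(card R - card Z') * ((1+q)^card S - 1)^card Z' * (if v \<in> Z then (1+q)^card S - 1 else (1+q)^card S)" .
  have fZ': "finite Z'" using Z' insert.hyps finite_subset by blast
  have cZ'le: "card Z' \<le> card R" using Z' insert.hyps card_mono by blast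
  show ?case
  proof (cases "v \<in> Z")
    case True
    then have "Z = insert v Z'" "v \<notin> Z'" unfolding Z'_def by auto
    then have cZ: "card Z = Suc (card Z')" using fZ' by simp
    have "card (insert v R) - card Z = card R - card Z'" using insert.hyps cZ by simp
    then show ?thesis using res True cZ by (simp add: mult_ac)
  next
    case False
    then have "Z = Z'" unfolding Z'_def by auto
    have "card (insert v R) - card Z = Suc (card R - card Z')" using insert.hyps \<open>Z = Z'\<close> cZ'le by simp
    then show ?thesis using res False \<open>Z = Z'\<close> by (simp add: mult_ac)
  qed
qed



lemma decomp_props:
  assumes V: "finite V" and S: "S \<subseteq> V" and D: "D \<in> dagsV (V - S)"
    and Bv: "B \<in> Bset S (V - S) (srcs (V - S) D)"
  shows "D \<union> B \<in> dagsV V" "srcs V (D \<union> B) = S" "L2 V (D \<union> B) = srcs (V - S) D"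
    "card (D \<union> B) = card D + card B"
proof -
  have Dsub: "D \<subseteq> (V - S) \<times> (V - S)" and Dac: "acyclic D" using D unfolding dagsV_def by auto
  have Bsub: "B \<subseteq> S \<times> (V - S)" and Bcov: "\<And>v. v \<in> srcs (V - S) D \<Longrightarrow> \<exists>u. (u,v) \<in> B"
    using Bv unfolding Bset_def by auto
  have noin: "(y,u) \<notin> D \<union> B" if "u \<in> S" for y u using that Dsub Bsub by auto
  show "D \<union> B \<in> dagsV V"
    unfolding dagsV_def
  proof (intro CollectI conjI)
    show "D \<union> B \<subseteq> V \<times> V" using Dsub Bsub S by auto
    show "acyclic (D \<union> B)"
    proof (rule acyclic_Un_src[OF Dac])
      fix u v y assume "(u,v) \<in> B"
      then have "u \<in> S" using Bsub by auto
      then show "(y,u) \<notin> D \<union> B" by (rule noin)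
    qed
  qed
  show srcs_eq: "srcs V (D \<union> B) = S"
  proof (rule set_eqI, rule iffI)
    fix v assume v: "v \<in> srcs V (D \<union> B)"
    show "v \<in> S"
    proof (rule ccontr)
      assume "v \<notin> S"
      then have vR: "v \<in> V - S" using v unfolding srcs_def by auto
      show False
      proof (cases "v \<in> srcs (V - S) D")
        case True
        then obtain u where "(u,v) \<in> B" using Bcov by blast
        then show False using v unfolding srcs_def by auto
      next
        case False
        then obtain u where "(u,v) \<in> D" using vR unfolding srcs_def by auto
        then show False using v unfolding srcs_def by auto
      qed
    qed
  next
    fix v assume "v \<in> S"
    then show "v \<in> srcs V (D \<union> B)" using noin S unfolding srcs_def by auto
  qed
  show "L2 V (D \<union> B) = srcs (V - S) D"
    unfolding L2_def srcs_eq using Dsub Bsub by (auto simp: srcs_def)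
  have fS: "finite S" by (rule finite_subset[OF S V])
  have "finite D" by (rule finite_subset[OF Dsub]) (simp add: V)
  moreover have "finite B" by (rule finite_subset[OF Bsub]) (simp add: V fS)
  moreover have "D \<inter> B = {}" using Dsub Bsub by auto
  ultimately show "card (D \<union> B) = card D + card B" by (rule card_Un_disjoint)
qed

lemma decomp_bij:
  assumes V: "finite V" and S: "S \<subseteq> V"
  shows "bij_betw (\<lambda>(D,B). D \<union> B) (Sigma (dagsV (V - S)) (\<lambda>D. Bset S (V - S) (srcs (V - S) D)))
           {E \<in> dagsV V. srcs V E = S}"
proof -
  let ?R = "V - S"
  let ?P = "Sigma (dagsV ?R) (\<lambda>D. Bset S ?R (srcs ?R D))"
  have inj: "inj_on (\<lambda>(D,B). D \<union> B) ?P"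
  proof (rule inj_onI, clarify)
    fix D B D' B'
    assume a: "D \<in> dagsV ?R" "B \<in> Bset S ?R (srcs ?R D)" "D' \<in> dagsV ?R"
       "B' \<in> Bset S ?R (srcs ?R D')" "D \<union> B = D' \<union> B'"
    have s: "D \<subseteq> ?R \<times> ?R" "D' \<subseteq> ?R \<times> ?R" "B \<subseteq> S \<times> ?R" "B' \<subseteq> S \<times> ?R"
      using a unfolding dagsV_def Bset_def by auto
    have e1: "D = (D \<union> B) \<inter> (?R \<times> ?R)" using s by auto
    have e2: "D' = (D' \<union> B') \<inter> (?R \<times> ?R)" using s by auto
    have e3: "B = (D \<union> B) \<inter> (S \<times> ?R)" using s by auto
    have e4: "B' = (D' \<union> B') \<inter> (S \<times> ?R)" using s by auto
    show "D = D' \<and> B = B'"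
    proof
      show "D = D'" using e1 e2 a(5) by simp
      show "B = B'" using e3 e4 a(5) by simp
    qed
  qed
  have img: "(\<lambda>(D,B). D \<union> B) ` ?P = {E \<in> dagsV V. srcs V E = S}"
  proof (rule set_eqI, rule iffI)
    fix E assume "E \<in> (\<lambda>(D,B). D \<union> B) ` ?P"
    then obtain D B where "E = D \<union> B" "D \<in> dagsV ?R" "B \<in> Bset S ?R (srcs ?R D)" by auto
    then show "E \<in> {E \<in> dagsV V. srcs V E = S}" using decomp_props[OF V S] by auto
  next
    fix E assume E: "E \<in> {E \<in> dagsV V. srcs V E = S}"
    have Esub: "E \<subseteq> V \<times> V" and Eac: "acyclic E" and Es: "srcs V E = S"
      using E unfolding dagsV_def by auto
    define D where "D = E \<inter> (?R \<times> ?R)"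
    define B where "B = E \<inter> (S \<times> ?R)"
    have noS: "(a,b) \<in> E \<Longrightarrow> b \<notin> S" for a b using Es unfolding srcs_def by auto
    have EDB: "E = D \<union> B" unfolding D_def B_def using Esub noS by auto
    have Din: "D \<in> dagsV ?R" unfolding dagsV_def D_def
      using acyclic_subset[OF Eac] by auto
    have Bin: "B \<in> Bset S ?R (srcs ?R D)"
      unfolding Bset_def
    proof (intro CollectI conjI ballI)
      show "B \<subseteq> S \<times> ?R" unfolding B_def by auto
    next
      fix v assume v: "v \<in> srcs ?R D"
      then have "v \<in> V" "v \<notin> S" unfolding srcs_def by auto
      then obtain u where u: "(u,v) \<in> E" using Es unfolding srcs_def by auto
      have "u \<in> V" using u Esub by auto
      have "u \<notin> ?R" using u v unfolding srcs_def D_def by auto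
      then have "u \<in> S" using \<open>u \<in> V\<close> by auto
      then show "\<exists>u. (u, v) \<in> B" using u v unfolding B_def srcs_def by auto
    qed
    have "(D, B) \<in> ?P" using Din Bin by blast
    then show "E \<in> (\<lambda>(D,B). D \<union> B) ` ?P"
      by (rule image_eqI[rotated]) (simp only: prod.case EDB)
  qed
  show ?thesis unfolding bij_betw_def using inj img by blast
qed

lemma decomp_sum:
  fixes q :: real and G :: "nat \<Rightarrow> real"
  assumes V: "finite V" and S: "S \<subseteq> V"
  shows "(\<Sum>E\<in>{E \<in> dagsV V. srcs V E = S}. q ^ card E * G (card (L2 V E))) =
         (\<Sum>D\<in>dagsV (V - S). q ^ card D * G (card (srcs (V - S) D)) *
             (\<Sum>B\<in>Bset S (V - S) (srcs (V - S) D). q ^ card B))"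
proof -
  let ?R = "V - S"
  let ?P = "Sigma (dagsV ?R) (\<lambda>D. Bset S ?R (srcs ?R D))"
  have "(\<Sum>E\<in>{E \<in> dagsV V. srcs V E = S}. q ^ card E * G (card (L2 V E))) =
        (\<Sum>x\<in>?P. (\<lambda>E. q ^ card E * G (card (L2 V E))) ((\<lambda>(D,B). D \<union> B) x))"
    by (rule sum.reindex_bij_betw[OF decomp_bij[OF V S], symmetric])
  also have "\<dots> = (\<Sum>(D,B)\<in>?P. q ^ card D * G (card (srcs ?R D)) * q ^ card B)"
    by (rule sum.cong) (auto simp: decomp_props[OF V S] power_add)
  also have "\<dots> = (\<Sum>D\<in>dagsV ?R. \<Sum>B\<in>Bset S ?R (srcs ?R D). q ^ card D * G (card (srcs ?R D)) * q ^ card B)"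
    by (rule sum.Sigma[symmetric]) (auto intro: finite_dagsV Bset_finite finite_subset[OF S] V)
  also have "\<dots> = (\<Sum>D\<in>dagsV ?R. q ^ card D * G (card (srcs ?R D)) * (\<Sum>B\<in>Bset S ?R (srcs ?R D). q ^ card B))"
    by (simp add: sum_distrib_left)
  finally show ?thesis .
qed



definition AA :: "real \<Rightarrow> nat set \<Rightarrow> real" where
  "AA q V = (\<Sum>E\<in>dagsV V. q ^ card E)"
definition MM :: "real \<Rightarrow> nat set \<Rightarrow> real" where
  "MM q V = (\<Sum>E\<in>dagsV V. q ^ card E * real (card (srcs V E)))"

lemma AA_pos:
  assumes "finite V" "q > 0"
  shows "AA q V \<ge> 1"
proof -
  have "{} \<in> dagsV V" unfolding dagsV_def by (auto simp: acyclic_def)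
  then have "q ^ card ({}::(nat\<times>nat) set) \<le> (\<Sum>E\<in>dagsV V. q ^ card E)"
    by (intro member_le_sum) (use assms finite_dagsV in auto)
  then show ?thesis unfolding AA_def by simp
qed

lemma cheb:
  fixes w f g :: "'a \<Rightarrow> real"
  assumes "finite I" "\<And>i. i \<in> I \<Longrightarrow> w i \<ge> 0"
    "\<And>i j. i \<in> I \<Longrightarrow> j \<in> I \<Longrightarrow> (f i - f j) * (g i - g j) \<le> 0"
  shows "(\<Sum>i\<in>I. w i * f i * g i) * (\<Sum>i\<in>I. w i) \<le> (\<Sum>i\<in>I. w i * f i) * (\<Sum>i\<in>I. w i * g i)"
proof -
  let ?S = "(\<Sum>i\<in>I. \<Sum>j\<in>I. w i * w j * ((f i - f j) * (g i - g j)))"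
  have t: "w i * w j * ((f i - f j) * (g i - g j)) \<le> 0" if "i \<in> I" "j \<in> I" for i j
    using assms(2)[OF that(1)] assms(2)[OF that(2)] assms(3)[OF that]
    by (simp add: mult_nonneg_nonpos)
  have "?S \<le> 0"
    by (intro sum_nonpos) (simp add: t)
  moreover have "?S = 2 * ((\<Sum>i\<in>I. w i * f i * g i) * (\<Sum>i\<in>I. w i) - (\<Sum>i\<in>I. w i * f i) * (\<Sum>i\<in>I. w i * g i))"
  proof -
    have e: "w i * w j * ((f i - f j) * (g i - g j)) =
        (w i * f i * g i) * w j + (w j * f j * g j) * w i - (w i * f i) * (w j * g j) - (w j * f j) * (w i * g i)" for i j
      by (simp add: algebra_simps)
    have "?S = (\<Sum>i\<in>I. \<Sum>j\<in>I. (w i * f i * g i) * w j) + (\<Sum>i\<in>I. \<Sum>j\<in>I. (w j * f j * g j) * w i)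
          - (\<Sum>i\<in>I. \<Sum>j\<in>I. (w i * f i) * (w j * g j)) - (\<Sum>i\<in>I. \<Sum>j\<in>I. (w j * f j) * (w i * g i))"
      unfolding e by (simp add: sum_subtractf sum.distrib)
    also have "\<dots> = 2 * ((\<Sum>i\<in>I. w i * f i * g i) * (\<Sum>i\<in>I. w i) - (\<Sum>i\<in>I. w i * f i) * (\<Sum>i\<in>I. w i * g i))"
    proof -
      have s1: "(\<Sum>i\<in>I. \<Sum>j\<in>I. (w i * f i * g i) * w j) = (\<Sum>i\<in>I. w i * f i * g i) * (\<Sum>i\<in>I. w i)"
        by (rule sum_product[symmetric])
      have s2: "(\<Sum>i\<in>I. \<Sum>j\<in>I. (w j * f j * g j) * w i) = (\<Sum>i\<in>I. w i) * (\<Sum>i\<in>I. w i * f i * g i)"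
        unfolding sum_product by (rule sum.cong[OF refl], rule sum.cong[OF refl], rule mult.commute)
      have s3: "(\<Sum>i\<in>I. \<Sum>j\<in>I. (w i * f i) * (w j * g j)) = (\<Sum>i\<in>I. w i * f i) * (\<Sum>i\<in>I. w i * g i)"
        by (rule sum_product[symmetric])
      have s4: "(\<Sum>i\<in>I. \<Sum>j\<in>I. (w j * f j) * (w i * g i)) = (\<Sum>i\<in>I. w i * g i) * (\<Sum>i\<in>I. w i * f i)"
        unfolding sum_product by (rule sum.cong[OF refl], rule sum.cong[OF refl], rule mult.commute)
      show ?thesis unfolding s1 s2 s3 s4 by (simp add: algebra_simps)
    qed
    finally show ?thesis .
  qed
  ultimately show ?thesis by simp
qed

lemma c_anti:
  fixes a b :: real
  assumes "0 \<le> b" "b \<le> a" "x \<le> y" "y \<le> m"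
  shows "a ^ (m - y) * b ^ y \<le> a ^ (m - x) * b ^ x"
proof -
  have "b ^ y = b ^ (y - x) * b ^ x" using assms(3) by (simp flip: power_add)
  moreover have "a ^ (m - x) = a ^ (m - y) * a ^ (y - x)" using assms(3,4) by (simp flip: power_add)
  moreover have "b ^ (y - x) \<le> a ^ (y - x)" using assms(1,2) by (intro power_mono)
  moreover have "0 \<le> a ^ (m - y)" "0 \<le> b ^ x" using assms(1,2) by auto
  ultimately show ?thesis by (simp add: mult.assoc mult_left_mono mult_right_mono)
qed

lemma perS:
  fixes q K :: real
  assumes V: "finite V" and S: "S \<subseteq> V" and q: "q > 0" and K: "K \<ge> 0"
    and hyp: "MM q (V - S) \<le> K * AA q (V - S)"
  shows "(\<Sum>E\<in>{E \<in> dagsV V. srcs V E = S}. q ^ card E * real (card (L2 V E)))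
          \<le> K * (\<Sum>E\<in>{E \<in> dagsV V. srcs V E = S}. q ^ card E)"
proof -
  let ?R = "V - S"
  define a where "a = (1+q) ^ card S"
  define c where "c = (\<lambda>x::nat. a ^ (card ?R - x) * (a - 1) ^ x)"
  have fS: "finite S" by (rule finite_subset[OF S V])
  have fR: "finite ?R" using V by simp
  have Bs: "(\<Sum>B\<in>Bset S ?R (srcs ?R D). q ^ card B) = c (card (srcs ?R D))" for D
    unfolding c_def a_def by (rule Bsum[OF fS fR]) (auto simp: srcs_def)
  have a1: "a \<ge> 1" unfolding a_def using q by simp
  let ?I = "dagsV ?R"
  let ?w = "\<lambda>D. q ^ card D" and ?f = "\<lambda>D. real (card (srcs ?R D))" and ?g = "\<lambda>D. c (card (srcs ?R D))"
  have L: "(\<Sum>E\<in>{E \<in> dagsV V. srcs V E = S}. q ^ card E * real (card (L2 V E))) = (\<Sum>D\<in>?I. ?w D * ?f D * ?g D)"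
    using decomp_sum[OF V S, of q real] Bs by simp
  have Rr: "(\<Sum>E\<in>{E \<in> dagsV V. srcs V E = S}. q ^ card E) = (\<Sum>D\<in>?I. ?w D * ?g D)"
    using decomp_sum[OF V S, of q "\<lambda>_. 1"] Bs by simp
  have ch: "(\<Sum>D\<in>?I. ?w D * ?f D * ?g D) * (\<Sum>D\<in>?I. ?w D) \<le> (\<Sum>D\<in>?I. ?w D * ?f D) * (\<Sum>D\<in>?I. ?w D * ?g D)"
  proof (rule cheb)
    show "finite ?I" using fR by (rule finite_dagsV)
    show "0 \<le> ?w D" for D using q by simp
    fix D D' assume "D \<in> ?I" "D' \<in> ?I"
    have le: "card (srcs ?R D) \<le> card ?R" "card (srcs ?R D') \<le> card ?R"
      using fR by (auto intro!: card_mono simp: srcs_def)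
    show "(?f D - ?f D') * (?g D - ?g D') \<le> 0"
    proof (cases "card (srcs ?R D) \<le> card (srcs ?R D')")
      case True
      then have "?g D' \<le> ?g D" unfolding c_def using a1 le by (intro c_anti) auto
      then show ?thesis using True by (intro mult_nonpos_nonneg) auto
    next
      case False
      then have "?g D \<le> ?g D'" unfolding c_def using a1 le by (intro c_anti) auto
      then show ?thesis using False by (intro mult_nonneg_nonpos) auto
    qed
  qed
  have A: "(\<Sum>D\<in>?I. ?w D) = AA q ?R" unfolding AA_def by simp
  have M: "(\<Sum>D\<in>?I. ?w D * ?f D) = MM q ?R" unfolding MM_def by simp
  have Apos: "AA q ?R \<ge> 1" using AA_pos[OF fR q] .
  have gnn: "(\<Sum>D\<in>?I. ?w D * ?g D) \<ge> 0"
    using q a1 by (intro sum_nonneg) (auto simp: c_def)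
  have "(\<Sum>D\<in>?I. ?w D * ?f D * ?g D) * AA q ?R \<le> MM q ?R * (\<Sum>D\<in>?I. ?w D * ?g D)"
    using ch unfolding A M .
  also have "\<dots> \<le> (K * AA q ?R) * (\<Sum>D\<in>?I. ?w D * ?g D)"
    by (rule mult_right_mono[OF hyp gnn])
  finally have "(\<Sum>D\<in>?I. ?w D * ?f D * ?g D) * AA q ?R \<le> (K * AA q ?R) * (\<Sum>D\<in>?I. ?w D * ?g D)" .
  then have "(\<Sum>D\<in>?I. ?w D * ?f D * ?g D) * AA q ?R \<le> (K * (\<Sum>D\<in>?I. ?w D * ?g D)) * AA q ?R"
    by (simp add: mult_ac)
  then have "(\<Sum>D\<in>?I. ?w D * ?f D * ?g D) \<le> K * (\<Sum>D\<in>?I. ?w D * ?g D)"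
    using Apos by simp
  then show ?thesis using L Rr by simp
qed



lemma switch_props:
  assumes V: "finite V" and E: "E \<in> dagsV V" and t: "t \<in> srcs V E"
    and F: "F \<subseteq> (srcs V E - {t}) \<times> {t}" "F \<noteq> {}"
  shows "E \<union> F \<in> dagsV V" "srcs V (E \<union> F) = srcs V E - {t}" "t \<in> L2 V (E \<union> F)"
    "card (E \<union> F) = card E + card F" "{e \<in> E \<union> F. snd e \<noteq> t} = E" "{e \<in> E \<union> F. snd e = t} = F"
proof -
  have Esub: "E \<subseteq> V \<times> V" and Eac: "acyclic E" using E unfolding dagsV_def by auto
  have tin: "\<And>u. (u,t) \<notin> E" using t unfolding srcs_def by auto
  have Fs: "\<And>u v. (u,v) \<in> F \<Longrightarrow> u \<in> srcs V E \<and> u \<noteq> t \<and> v = t" using F(1) by auto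
  have Fh: "\<And>u v. (u,v) \<in> F \<Longrightarrow> v = t" using Fs by blast
  have Ft: "\<And>u v. (u,v) \<in> F \<Longrightarrow> u \<in> V \<and> (\<forall>w. (w,u) \<notin> E) \<and> u \<noteq> t"
    using Fs unfolding srcs_def by blast
  show "E \<union> F \<in> dagsV V"
    unfolding dagsV_def
  proof (intro CollectI conjI)
    show "E \<union> F \<subseteq> V \<times> V" using Esub Ft Fh t unfolding srcs_def by auto
    show "acyclic (E \<union> F)"
    proof (rule acyclic_Un_src[OF Eac])
      fix u v y assume "(u,v) \<in> F"
      then have "u \<in> srcs V E" "u \<noteq> t" using Fs by auto
      then show "(y,u) \<notin> E \<union> F" using Fh unfolding srcs_def by blast
    qed
  qed
  obtain e where e: "e \<in> F" using F(2) by auto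
  then obtain u0 where u0: "(u0,t) \<in> F" using F(1) by auto
  show srcs_eq: "srcs V (E \<union> F) = srcs V E - {t}"
  proof (rule set_eqI, rule iffI)
    fix v assume v: "v \<in> srcs V (E \<union> F)"
    have "v \<in> V" "\<And>u. (u,v) \<notin> E" "\<And>u. (u,v) \<notin> F" using v unfolding srcs_def by auto
    moreover have "v \<noteq> t" using u0 \<open>\<And>u. (u,v) \<notin> F\<close> by blast
    ultimately show "v \<in> srcs V E - {t}" unfolding srcs_def by blast
  next
    fix v assume v: "v \<in> srcs V E - {t}"
    then have "v \<in> V" "\<And>u. (u,v) \<notin> E" "v \<noteq> t" unfolding srcs_def by auto
    moreover have "\<And>u. (u,v) \<notin> F" using Fh \<open>v \<noteq> t\<close> by blast
    ultimately show "v \<in> srcs V (E \<union> F)" unfolding srcs_def by blast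
  qed
  have "t \<in> V" using t unfolding srcs_def by auto
  moreover have "\<And>u. (u,t) \<in> E \<union> F \<Longrightarrow> u \<in> srcs V E - {t}" using tin Fs by blast
  ultimately show "t \<in> L2 V (E \<union> F)"
    unfolding L2_def srcs_eq by blast
  have "finite E" by (rule finite_subset[OF Esub]) (simp add: V)
  moreover have "finite F" by (rule finite_subset[OF F(1)]) (auto simp: srcs_def V)
  moreover have "E \<inter> F = {}" using tin Fh by auto
  ultimately show "card (E \<union> F) = card E + card F" by (rule card_Un_disjoint)
  show "{e \<in> E \<union> F. snd e \<noteq> t} = E" using tin Fh by auto
  show "{e \<in> E \<union> F. snd e = t} = F" using tin Fh by auto
qed

lemma switch:
  fixes q :: real and J :: "nat set"
  assumes V: "finite V" and q: "q > 0"
  shows "(\<Sum>E\<in>{E \<in> dagsV V. card (srcs V E) \<in> J}.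
            q ^ card E * (real (card (srcs V E)) * ((1+q) ^ (card (srcs V E) - 1) - 1)))
         \<le> (\<Sum>E\<in>{E \<in> dagsV V. Suc (card (srcs V E)) \<in> J}. q ^ card E * real (card (L2 V E)))"
proof -
  define DS where "DS = {E \<in> dagsV V. card (srcs V E) \<in> J}"
  define DS' where "DS' = {E \<in> dagsV V. Suc (card (srcs V E)) \<in> J}"
  define Fs where "Fs = (\<lambda>E t. Pow ((srcs V E - {t}) \<times> {t}) - {{}})"
  define Trip where "Trip = Sigma DS (\<lambda>E. Sigma (srcs V E) (\<lambda>t. Fs E t))"
  define Pairs where "Pairs = Sigma DS' (\<lambda>E. L2 V E)"
  define \<phi> where "\<phi> = (\<lambda>(E::(nat\<times>nat) set, t::nat, F::(nat\<times>nat) set). (E \<union> F, t))"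
  have fsrc: "finite (srcs V E)" for E using V unfolding srcs_def by auto
  have finDS: "finite DS" unfolding DS_def using finite_dagsV[OF V] by auto
  have finDS': "finite DS'" unfolding DS'_def using finite_dagsV[OF V] by auto
  have inner: "(\<Sum>t\<in>srcs V E. \<Sum>F\<in>Fs E t. q ^ card F) =
      real (card (srcs V E)) * ((1+q) ^ (card (srcs V E) - 1) - 1)" for E
  proof -
    have "(\<Sum>F\<in>Fs E t. q ^ card F) = (1+q) ^ (card (srcs V E) - 1) - 1" if "t \<in> srcs V E" for t
    proof -
      have fin: "finite ((srcs V E - {t}) \<times> {t})" using fsrc by auto
      have "card ((srcs V E - {t}) \<times> {t}) = card (srcs V E) - 1"
        using that fsrc by (simp add: card_cartesian_product)
      then show ?thesis unfolding Fs_def using sum_pow_card_ne[OF fin, of q] by simp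
    qed
    then show ?thesis by simp
  qed
  have finFs: "finite (Fs E t)" for E t unfolding Fs_def using fsrc by auto
  have fL2: "\<And>E. finite (L2 V E)" using V unfolding L2_def by auto
  have "(\<Sum>E\<in>DS. q ^ card E * (real (card (srcs V E)) * ((1+q) ^ (card (srcs V E) - 1) - 1)))
      = (\<Sum>E\<in>DS. \<Sum>t\<in>srcs V E. \<Sum>F\<in>Fs E t. q ^ card E * q ^ card F)"
    by (rule sum.cong[OF refl]) (simp only: inner[symmetric] sum_distrib_left)
  also have "\<dots> = (\<Sum>E\<in>DS. \<Sum>tF\<in>Sigma (srcs V E) (Fs E). q ^ card E * q ^ card (snd tF))"
  proof (rule sum.cong[OF refl])
    fix E
    show "(\<Sum>t\<in>srcs V E. \<Sum>F\<in>Fs E t. q ^ card E * q ^ card F) =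
               (\<Sum>tF\<in>Sigma (srcs V E) (Fs E). q ^ card E * q ^ card (snd tF))"
      using sum.Sigma[of "srcs V E" "Fs E" "\<lambda>t F. q ^ card E * q ^ card F"] fsrc finFs
      by (simp add: case_prod_unfold)
  qed
  also have "\<dots> = (\<Sum>x\<in>Trip. q ^ card (fst x) * q ^ card (snd (snd x)))"
    unfolding Trip_def
    using sum.Sigma[of DS "\<lambda>E. Sigma (srcs V E) (Fs E)" "\<lambda>E tF. q ^ card E * q ^ card (snd tF)"] finDS fsrc finFs
    by (simp add: case_prod_unfold)
  also have "\<dots> = (\<Sum>x\<in>Trip. q ^ card (fst (\<phi> x)))"
  proof (rule sum.cong[OF refl])
    fix x assume "x \<in> Trip"
    then obtain E t F where x: "x = (E,t,F)" "E \<in> DS" "t \<in> srcs V E" "F \<in> Fs E t"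
      unfolding Trip_def by auto
    have "E \<in> dagsV V" "F \<subseteq> (srcs V E - {t}) \<times> {t}" "F \<noteq> {}" using x unfolding DS_def Fs_def by auto
    note sp = switch_props[OF V this(1) x(3) this(2,3)]
    show "q ^ card (fst x) * q ^ card (snd (snd x)) = q ^ card (fst (\<phi> x))"
      unfolding x \<phi>_def using sp(4) by (simp add: power_add)
  qed
  also have "\<dots> = (\<Sum>y\<in>\<phi> ` Trip. q ^ card (fst y))"
  proof (rule sum.reindex[symmetric, unfolded comp_def])
    show "inj_on \<phi> Trip"
    proof (rule inj_onI)
      fix x y assume xy: "x \<in> Trip" "y \<in> Trip" "\<phi> x = \<phi> y"
      obtain E t F where x: "x = (E,t,F)" "E \<in> DS" "t \<in> srcs V E" "F \<in> Fs E t"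
        using xy(1) unfolding Trip_def by auto
      obtain E' t' F' where y: "y = (E',t',F')" "E' \<in> DS" "t' \<in> srcs V E'" "F' \<in> Fs E' t'"
        using xy(2) unfolding Trip_def by auto
      have "E \<in> dagsV V" "F \<subseteq> (srcs V E - {t}) \<times> {t}" "F \<noteq> {}" using x unfolding DS_def Fs_def by auto
      note sp = switch_props[OF V this(1) x(3) this(2,3)]
      have "E' \<in> dagsV V" "F' \<subseteq> (srcs V E' - {t'}) \<times> {t'}" "F' \<noteq> {}" using y unfolding DS_def Fs_def by auto
      note sp' = switch_props[OF V this(1) y(3) this(2,3)]
      have eq: "E \<union> F = E' \<union> F'" "t = t'" using xy(3) unfolding x y \<phi>_def by auto
      have "E = E'" using sp(5) sp'(5) eq by metis
      moreover have "F = F'" using sp(6) sp'(6) eq by metis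
      ultimately show "x = y" using x y eq by simp
    qed
  qed
  also have "\<dots> \<le> (\<Sum>y\<in>Pairs. q ^ card (fst y))"
  proof (rule sum_mono2)
    show "finite Pairs" unfolding Pairs_def using finDS' V by (auto simp: L2_def)
    show "\<phi> ` Trip \<subseteq> Pairs"
    proof
      fix y assume "y \<in> \<phi> ` Trip"
      then obtain E t F where x: "y = \<phi> (E,t,F)" "E \<in> DS" "t \<in> srcs V E" "F \<in> Fs E t"
        unfolding Trip_def by auto
      have "E \<in> dagsV V" "F \<subseteq> (srcs V E - {t}) \<times> {t}" "F \<noteq> {}" using x unfolding DS_def Fs_def by auto
      note sp = switch_props[OF V this(1) x(3) this(2,3)]
      have "card (srcs V E - {t}) = card (srcs V E) - 1" using x(3) fsrc by simp
      moreover have "card (srcs V E) \<ge> 1" using x(3) fsrc card_0_eq[of "srcs V E"] by fastforce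
      ultimately have "Suc (card (srcs V (E \<union> F))) = card (srcs V E)" using sp(2) by simp
      then have "E \<union> F \<in> DS'" using x(2) sp(1) unfolding DS_def DS'_def by auto
      then show "y \<in> Pairs" unfolding Pairs_def x \<phi>_def using sp(3) by auto
    qed
    show "\<And>y. y \<in> Pairs - \<phi> ` Trip \<Longrightarrow> 0 \<le> q ^ card (fst y)" using q by simp
  qed
  also have "\<dots> = (\<Sum>E\<in>DS'. \<Sum>t\<in>L2 V E. q ^ card E)"
    unfolding Pairs_def
    using sum.Sigma[of DS' "L2 V" "\<lambda>E t. q ^ card E"] finDS' fL2
    by (simp add: case_prod_unfold)
  also have "\<dots> = (\<Sum>E\<in>DS'. q ^ card E * real (card (L2 V E)))"
    by (simp add: mult.commute)
  finally show ?thesis unfolding DS_def DS'_def .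
qed



lemma L2_empty_src: "srcs V E = {} \<Longrightarrow> L2 V E = {}"
  unfolding L2_def srcs_def by auto

lemma agg:
  fixes q K :: real
  assumes V: "finite V" and q: "q > 0" and K: "K \<ge> 0"
    and IH: "\<And>R. R \<subseteq> V \<Longrightarrow> card R < card V \<Longrightarrow> MM q R \<le> K * AA q R"
  shows "(\<Sum>E\<in>{E \<in> dagsV V. card (srcs V E) \<in> J}. q ^ card E * real (card (L2 V E)))
       \<le> K * (\<Sum>E\<in>{E \<in> dagsV V. card (srcs V E) \<in> J}. q ^ card E)"
proof -
  define DS where "DS = {E \<in> dagsV V. card (srcs V E) \<in> J}"
  have finDS: "finite DS" unfolding DS_def using finite_dagsV[OF V] by auto
  have img: "srcs V ` DS \<subseteq> Pow V" unfolding srcs_def by auto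
  have finP: "finite (Pow V)" using V by simp
  have "(\<Sum>E\<in>DS. q ^ card E * real (card (L2 V E))) =
        (\<Sum>S\<in>Pow V. \<Sum>E\<in>{E. E \<in> DS \<and> srcs V E = S}. q ^ card E * real (card (L2 V E)))"
    by (rule sum.group[OF finDS finP img, symmetric])
  also have "\<dots> \<le> (\<Sum>S\<in>Pow V. K * (\<Sum>E\<in>{E. E \<in> DS \<and> srcs V E = S}. q ^ card E))"
  proof (rule sum_mono)
    fix S assume S: "S \<in> Pow V"
    show "(\<Sum>E\<in>{E. E \<in> DS \<and> srcs V E = S}. q ^ card E * real (card (L2 V E)))
          \<le> K * (\<Sum>E\<in>{E. E \<in> DS \<and> srcs V E = S}. q ^ card E)"
    proof (cases "card S \<in> J \<and> S \<noteq> {}")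
      case True
      have eq: "{E. E \<in> DS \<and> srcs V E = S} = {E \<in> dagsV V. srcs V E = S}"
        unfolding DS_def using True by auto
      have SV: "S \<subseteq> V" using S by auto
      have fS: "finite S" using SV V finite_subset by blast
      have "card (V - S) = card V - card S" using card_Diff_subset[OF fS SV] .
      moreover have "card S > 0" using True fS by auto
      moreover have "card S \<le> card V" using card_mono[OF V SV] .
      ultimately have "card (V - S) < card V" by linarith
      then have "MM q (V - S) \<le> K * AA q (V - S)" by (intro IH) auto
      then show ?thesis unfolding eq by (rule perS[OF V SV q K])
    next
      case False
      have "(\<Sum>E\<in>{E. E \<in> DS \<and> srcs V E = S}. q ^ card E * real (card (L2 V E))) = 0"
      proof (rule sum.neutral, rule ballI)
        fix E assume "E \<in> {E. E \<in> DS \<and> srcs V E = S}"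
        then have "card (srcs V E) \<in> J" "srcs V E = S" unfolding DS_def by auto
        then have "srcs V E = {}" using False by auto
        then show "q ^ card E * real (card (L2 V E)) = 0" by (simp add: L2_empty_src)
      qed
      moreover have "0 \<le> K * (\<Sum>E\<in>{E. E \<in> DS \<and> srcs V E = S}. q ^ card E)"
        using K q by (intro mult_nonneg_nonneg sum_nonneg) auto
      ultimately show ?thesis by simp
    qed
  qed
  also have "\<dots> = K * (\<Sum>S\<in>Pow V. \<Sum>E\<in>{E. E \<in> DS \<and> srcs V E = S}. q ^ card E)"
    by (simp add: sum_distrib_left)
  also have "(\<Sum>S\<in>Pow V. \<Sum>E\<in>{E. E \<in> DS \<and> srcs V E = S}. q ^ card E) = (\<Sum>E\<in>DS. q ^ card E)"
    by (rule sum.group[OF finDS finP img])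
  finally show ?thesis unfolding DS_def .
qed

lemma a_lower:
  fixes q :: real
  assumes q: "q > 0" and N0: "(1+q) ^ N0 \<ge> 3"
  shows "real x * ((1+q) ^ (x - 1) - 1) \<ge> 2 * real x - 2 * real N0"
proof (cases "x \<ge> N0 + 1")
  case True
  have "(1+q) ^ N0 \<le> (1+q) ^ (x - 1)" using True q by (intro power_increasing) auto
  then have "(1+q) ^ (x - 1) - 1 \<ge> 2" using N0 by linarith
  then have "real x * ((1+q) ^ (x - 1) - 1) \<ge> real x * 2" by (intro mult_left_mono) auto
  then show ?thesis by simp
next
  case False
  have "(1+q) ^ (x - 1) \<ge> 1" using q by simp
  then have "real x * ((1+q) ^ (x - 1) - 1) \<ge> 0" by simp
  moreover have "2 * real x - 2 * real N0 \<le> 0" using False by simp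
  ultimately show ?thesis by linarith
qed

lemma mu_bound:
  fixes q :: real
  assumes q: "q > 0" and N0: "(1+q) ^ N0 \<ge> 3" and V: "finite V"
  shows "MM q V \<le> (2 * real N0) * AA q V"
  using V
proof (induction "card V" arbitrary: V rule: less_induct)
  case less
  define K where "K = 2 * real N0"
  have K: "K \<ge> 0" unfolding K_def by simp
  have IH: "\<And>R. R \<subseteq> V \<Longrightarrow> card R < card V \<Longrightarrow> MM q R \<le> K * AA q R"
    unfolding K_def using less.hyps less.prems finite_subset by blast
  have a1: "(\<Sum>E\<in>dagsV V. q ^ card E * real (card (L2 V E))) \<le> K * AA q V"
    using agg[OF less.prems q K IH, of UNIV] unfolding AA_def by simp
  have a2: "(\<Sum>E\<in>dagsV V. q ^ card E * (real (card (srcs V E)) * ((1+q) ^ (card (srcs V E) - 1) - 1)))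
         \<le> (\<Sum>E\<in>dagsV V. q ^ card E * real (card (L2 V E)))"
    using switch[OF less.prems q, of UNIV] by simp
  have a3: "(\<Sum>E\<in>dagsV V. q ^ card E * (2 * real (card (srcs V E)) - 2 * real N0))
         \<le> (\<Sum>E\<in>dagsV V. q ^ card E * (real (card (srcs V E)) * ((1+q) ^ (card (srcs V E) - 1) - 1)))"
    by (rule sum_mono, rule mult_left_mono) (use a_lower[OF q N0] q in auto)
  have a4: "(\<Sum>E\<in>dagsV V. q ^ card E * (2 * real (card (srcs V E)) - 2 * real N0))
          = 2 * MM q V - 2 * real N0 * AA q V"
    unfolding MM_def AA_def by (simp add: algebra_simps sum_subtractf sum_distrib_left)
  have "2 * MM q V - 2 * real N0 * AA q V \<le> K * AA q V" using a1 a2 a3 a4 by linarith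
  then show ?case unfolding K_def by simp
qed



definition TT :: "real \<Rightarrow> nat set \<Rightarrow> nat \<Rightarrow> real" where
  "TT q V s = (\<Sum>E\<in>{E \<in> dagsV V. s \<le> card (srcs V E)}. q ^ card E)"

lemma TT_le_AA:
  assumes "finite V" "q > 0"
  shows "TT q V s \<le> AA q V"
  unfolding TT_def AA_def
  by (rule sum_mono2) (use assms finite_dagsV in auto)

lemma tail_step:
  fixes q :: real
  assumes q: "q > 0" and N0: "(1+q) ^ N0 \<ge> 3" and V: "finite V" and s: "s \<ge> 2 * N0 + 1"
  shows "TT q V s \<le> TT q V (s - 1) / 2"
proof -
  define K where "K = 2 * real N0"
  have "N0 \<noteq> 0" using N0 by (cases N0) auto
  then have Kpos: "K > 0" unfolding K_def by simp
  have IH: "\<And>R. R \<subseteq> V \<Longrightarrow> card R < card V \<Longrightarrow> MM q R \<le> K * AA q R"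
    unfolding K_def using mu_bound[OF q N0] V finite_subset by blast
  have b1: "(\<Sum>E\<in>{E \<in> dagsV V. card (srcs V E) \<in> {j. s \<le> j}}.
            q ^ card E * (real (card (srcs V E)) * ((1+q) ^ (card (srcs V E) - 1) - 1)))
         \<le> (\<Sum>E\<in>{E \<in> dagsV V. Suc (card (srcs V E)) \<in> {j. s \<le> j}}. q ^ card E * real (card (L2 V E)))"
    by (rule switch[OF V q])
  have b2: "(\<Sum>E\<in>{E \<in> dagsV V. card (srcs V E) \<in> {j. s \<le> Suc j}}. q ^ card E * real (card (L2 V E)))
       \<le> K * (\<Sum>E\<in>{E \<in> dagsV V. card (srcs V E) \<in> {j. s \<le> Suc j}}. q ^ card E)"
    by (rule agg[OF V q _ IH]) (use Kpos in auto)
  have set1: "{E \<in> dagsV V. card (srcs V E) \<in> {j. s \<le> Suc j}} = {E \<in> dagsV V. s - 1 \<le> card (srcs V E)}"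
    using s by auto
  have set2: "{E \<in> dagsV V. Suc (card (srcs V E)) \<in> {j. s \<le> j}} = {E \<in> dagsV V. card (srcs V E) \<in> {j. s \<le> Suc j}}"
    by auto
  have set3: "{E \<in> dagsV V. card (srcs V E) \<in> {j. s \<le> j}} = {E \<in> dagsV V. s \<le> card (srcs V E)}"
    by auto
  have b4: "(\<Sum>E\<in>{E \<in> dagsV V. s \<le> card (srcs V E)}. q ^ card E * (2 * K))
     \<le> (\<Sum>E\<in>{E \<in> dagsV V. s \<le> card (srcs V E)}.
            q ^ card E * (real (card (srcs V E)) * ((1+q) ^ (card (srcs V E) - 1) - 1)))"
  proof (rule sum_mono, rule mult_left_mono)
    fix E assume "E \<in> {E \<in> dagsV V. s \<le> card (srcs V E)}"
    then have X: "card (srcs V E) \<ge> 2 * N0 + 1" using s by auto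
    define X where "X = card (srcs V E)"
    have "(1+q) ^ (2 * N0) \<le> (1+q) ^ (X - 1)" using X q unfolding X_def by (intro power_increasing) auto
    moreover have "(1+q) ^ (2 * N0) = ((1+q) ^ N0)^2" by (simp add: power_mult mult.commute)
    moreover have "((1+q) ^ N0)^2 \<ge> 3^2" using N0 by (intro power_mono) auto
    ultimately have "(1+q) ^ (X - 1) - 1 \<ge> 8" by simp
    then have "real X * ((1+q) ^ (X - 1) - 1) \<ge> real X * 8" by (intro mult_left_mono) auto
    moreover have "real X \<ge> 2 * real N0 + 1" using X unfolding X_def by simp
    ultimately show "2 * K \<le> real (card (srcs V E)) * ((1+q) ^ (card (srcs V E) - 1) - 1)"
      unfolding K_def X_def by linarith
  next
    show "0 \<le> q ^ card E" for E using q by simp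
  qed
  have "2 * K * TT q V s \<le> K * TT q V (s - 1)"
  proof -
    have "2 * K * TT q V s = (\<Sum>E\<in>{E \<in> dagsV V. s \<le> card (srcs V E)}. q ^ card E * (2 * K))"
      unfolding TT_def by (simp add: sum_distrib_left sum_distrib_right mult_ac)
    also have "\<dots> \<le> K * TT q V (s - 1)"
      using b4 b1 b2 unfolding set1 set2 set3 TT_def by linarith
    finally show ?thesis .
  qed
  then show ?thesis using Kpos by (simp add: field_simps)
qed

lemma tail_iter:
  fixes q :: real
  assumes q: "q > 0" and N0: "(1+q) ^ N0 \<ge> 3" and V: "finite V"
  shows "TT q V (2 * N0 + 1 + i) \<le> (1/2) ^ Suc i * AA q V"
proof (induction i)
  case 0
  have "TT q V (2 * N0 + 1) \<le> TT q V (2 * N0 + 1 - 1) / 2" by (rule tail_step[OF q N0 V]) simp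
  also have "\<dots> \<le> AA q V / 2" using TT_le_AA[OF V q] by simp
  finally show ?case by simp
next
  case (Suc i)
  have "TT q V (2 * N0 + 1 + Suc i) \<le> TT q V (2 * N0 + 1 + Suc i - 1) / 2" by (rule tail_step[OF q N0 V]) simp
  also have "\<dots> = TT q V (2 * N0 + 1 + i) / 2" by simp
  also have "\<dots> \<le> (1/2) ^ Suc i * AA q V / 2" using Suc by simp
  finally show ?case by simp
qed



lemma N0_bound:
  fixes p :: real
  assumes p: "0 < p" "p \<le> 1/2"
  shows "(1 + p / (1 - p)) ^ nat \<lceil>5 / (4 * p)\<rceil> \<ge> 3"
proof -
  define N0 where "N0 = nat \<lceil>5 / (4 * p)\<rceil>"
  have N0ge: "real N0 \<ge> 5 / (4 * p)" unfolding N0_def by linarith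
  have pN0: "p * real N0 \<ge> 5/4" using N0ge p by (simp add: field_simps)
  have "(1 - p) ^ N0 \<le> exp (- p) ^ N0"
    using p exp_ge_add_one_self[of "-p"] by (intro power_mono) auto
  also have "\<dots> = exp (- (p * real N0))" by (simp add: exp_of_nat_mult[symmetric] mult.commute)
  also have "\<dots> \<le> exp (- (5/4))" using pN0 by simp
  also have "exp (- (5/4::real)) \<le> 1/3"
  proof -
    have "1 + 5/4 + (5/4::real)^2 / 2 \<le> exp (5/4)" by (rule exp_lower_Taylor_quadratic) simp
    then have "3 \<le> exp (5/4::real)" by (simp add: power2_eq_square)
    then show ?thesis by (simp add: exp_minus field_simps)
  qed
  finally have le: "(1 - p) ^ N0 \<le> 1/3" .
  have pos: "(1 - p) ^ N0 > 0" using p by simp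
  have "1 + p / (1 - p) = 1 / (1 - p)" using p by (simp add: field_simps)
  then have "(1 + p / (1 - p)) ^ N0 = 1 / (1 - p) ^ N0" by (simp add: power_divide)
  also have "\<dots> \<ge> 3" using le pos by (simp add: field_simps)
  finally show ?thesis unfolding N0_def .
qed

lemma fixed_bound:
  fixes p :: real and n :: nat
  assumes p: "0 < p" "p \<le> 1/2"
  shows "1 - p \<le> dag_prob n p (\<lambda>E. real (card (sources n E)) \<le> 5 / p)"
    "dag_prob n p (\<lambda>E. real (card (sources n E)) \<le> 5 / p) \<le> 1"
proof -
  define q where "q = p / (1 - p)"
  have q: "q > 0" unfolding q_def using p by simp
  define V where "V = {1..n::nat}"
  have V: "finite V" unfolding V_def by simp
  define N0 where "N0 = nat \<lceil>5 / (4 * p)\<rceil>"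
  have N0: "(1+q) ^ N0 \<ge> 3" unfolding q_def N0_def by (rule N0_bound[OF p])
  define P where "P = (\<lambda>E. real (card (srcs V E)) \<le> 5 / p)"
  define W where "W = (\<Sum>E\<in>{E \<in> dagsV V. P E}. q ^ card E)"
  define A where "A = AA q V"
  have A1: "A \<ge> 1" unfolding A_def by (rule AA_pos[OF V q])
  have dp: "dag_prob n p (\<lambda>E. real (card (sources n E)) \<le> 5 / p) = W / A"
    unfolding dag_prob_def W_def A_def AA_def P_def dag_weight_def dags_def dagsV_def sources_def srcs_def
      V_def q_def by simp
  define F where "F = \<lfloor>5 / p\<rfloor>"
  have F: "real_of_int F \<le> 5 / p" "5 / p < real_of_int F + 1" unfolding F_def by linarith+
  have F0: "F \<ge> 0" unfolding F_def using p by simp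
  define s where "s = nat F + 1"
  have Peq: "\<not> P E \<longleftrightarrow> s \<le> card (srcs V E)" for E
  proof -
    have "real (nat F) = real_of_int F" using F0 by simp
    then show ?thesis unfolding P_def s_def using F F0 by linarith
  qed
  have split: "A = W + TT q V s"
  proof -
    have un: "dagsV V = {E \<in> dagsV V. P E} \<union> {E \<in> dagsV V. s \<le> card (srcs V E)}" using Peq by blast
    have "A = (\<Sum>E\<in>{E \<in> dagsV V. P E} \<union> {E \<in> dagsV V. s \<le> card (srcs V E)}. q ^ card E)"
      unfolding A_def AA_def using un by simp
    also have "\<dots> = W + TT q V s" unfolding W_def TT_def
      by (rule sum.union_disjoint) (use finite_dagsV[OF V] Peq in auto)
    finally show ?thesis .
  qed
  have T0: "TT q V s \<ge> 0" unfolding TT_def using q by (intro sum_nonneg) auto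
  have W0: "W \<ge> 0" unfolding W_def using q by (intro sum_nonneg) auto
  show "dag_prob n p (\<lambda>E. real (card (sources n E)) \<le> 5 / p) \<le> 1"
    unfolding dp using split T0 A1 by simp
  have "5 / (4 * p) > 0" using p by simp
  then have c0: "\<lceil>5 / (4 * p)\<rceil> \<ge> 0" by linarith
  have "real N0 = real_of_int \<lceil>5 / (4 * p)\<rceil>" unfolding N0_def using c0 by simp
  then have N0le: "real N0 < 5 / (4 * p) + 1" by linarith
  have sgt: "real s > 5 / p" unfolding s_def using F F0 by simp
  have "real (2 * N0 + 1) + 1 / p \<le> real s"
  proof -
    have e1: "5 / p = 5 * (1 / p)" by simp
    have e2: "1 / p \<ge> 2" using p by (simp add: field_simps)
    have e3: "5 / (4 * p) = (5/4) * (1 / p)" by simp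
    have e4: "real (2 * N0 + 1) = 2 * real N0 + 1" by simp
    show ?thesis using N0le sgt e1 e2 e3 e4 by linarith
  qed
  then have r1: "real (2 * N0 + 1) + 1 / p \<le> real s" .
  have "1 / p > 0" using p by simp
  then have "real (2 * N0 + 1) \<le> real s" using r1 by linarith
  then have sj: "s \<ge> 2 * N0 + 1" by (simp only: of_nat_le_iff)
  have ireal: "real (s - (2 * N0 + 1)) \<ge> 1 / p" using r1 sj by (simp only: of_nat_diff)
  define i where "i = s - (2 * N0 + 1)"
  have si: "s = 2 * N0 + 1 + i" unfolding i_def using sj by simp
  have ipos: "real i > 0" using ireal p unfolding i_def by (smt (verit) divide_pos_pos)
  have "TT q V s \<le> (1/2) ^ Suc i * A" unfolding si A_def by (rule tail_iter[OF q N0 V])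
  also have "\<dots> \<le> (1/2) ^ i * A" using A1 by (intro mult_right_mono) (auto simp: power_Suc)
  also have "(1/2::real) ^ i \<le> p"
  proof -
    have "real i < 2 ^ i" using less_exp[of i] by (metis of_nat_less_iff of_nat_numeral of_nat_power)
    then have "(1/2::real) ^ i \<le> 1 / real i" using ipos by (simp add: power_one_over field_simps)
    also have "\<dots> \<le> p" using ireal ipos p unfolding i_def by (simp add: field_simps)
    finally show ?thesis .
  qed
  then have "(1/2::real) ^ i * A \<le> p * A" using A1 by (intro mult_right_mono) auto
  finally have "TT q V s \<le> p * A" .
  then have "W \<ge> (1 - p) * A" using split by (simp add: algebra_simps)
  then show "1 - p \<le> dag_prob n p (\<lambda>E. real (card (sources n E)) \<le> 5 / p)"
    unfolding dp using A1 by (simp add: field_simps)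
qed



theorem mainTheorem6:
  fixes p :: "nat \<Rightarrow> real"
  assumes "\<And>n. 0 < p n \<and> p n < 1"
    and "(\<lambda>n. p n * ln (real n)) \<longlonglongrightarrow> 0"
  shows "(\<lambda>n. dag_prob n (p n) (\<lambda>E. real (card (sources n E)) \<le> 5 / p n)) \<longlonglongrightarrow> 1"
proof -
  have ev1: "eventually (\<lambda>n. p n \<le> p n * ln (real n)) sequentially"
  proof (rule eventually_sequentiallyI[of 3])
    fix n :: nat assume n: "3 \<le> n"
    have "exp 1 \<le> real n" using exp_le n by linarith
    then have "1 \<le> ln (real n)" using n by (subst ln_ge_iff) auto
    then show "p n \<le> p n * ln (real n)" using assms(1)[of n] by simp
  qed
  have ev0: "eventually (\<lambda>n. 0 \<le> p n) sequentially" using assms(1) by (simp add: less_imp_le)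
  have p0: "p \<longlonglongrightarrow> 0"
    by (rule tendsto_sandwich[OF ev0 ev1 tendsto_const assms(2)])
  have evh: "eventually (\<lambda>n. p n < 1/2) sequentially"
    using order_tendstoD(2)[OF p0, of "1/2"] by simp
  have lo: "eventually (\<lambda>n. 1 - p n \<le> dag_prob n (p n) (\<lambda>E. real (card (sources n E)) \<le> 5 / p n)) sequentially"
    using evh by eventually_elim (use fixed_bound(1) assms(1) in auto)
  have hi: "eventually (\<lambda>n. dag_prob n (p n) (\<lambda>E. real (card (sources n E)) \<le> 5 / p n) \<le> 1) sequentially"
    using evh by eventually_elim (use fixed_bound(2) assms(1) in auto)
  have "(\<lambda>n. 1 - p n) \<longlonglongrightarrow> 1 - 0" by (intro tendsto_diff tendsto_const p0)
  then have l1: "(\<lambda>n. 1 - p n) \<longlonglongrightarrow> 1" by simp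
  show ?thesis by (rule tendsto_sandwich[OF lo hi l1 tendsto_const])
qed



end
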